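(* Let $\mathcal F$ be a proper filter on $\omega$. The game $\mathfrak G(\mathcal F,[\omega]^{<\omega},\mathcal F^c)$ is equivalent to $\mathfrak G(\mathcal F,\omega,\mathcal F^c)$ (a player has a winning strategy in one iff the same player has one in the other). Consequently, in $\mathfrak G(\mathcal F,[\omega]^{<\omega},\mathcal F^c)$, player I never has a winning strategy, and player II has a winning strategy if and only if $\mathcal F$ is not a Ramsey ultrafilter.
   Context: A filter on $\omega$ is a family $\mathcal F\subseteq\mathcal P(\omega)$ closed under finite intersections and supersets and containing all cofinite sets; it is proper if all its members are infinite. $\mathcal F^c=\mathcal P(\omega)\setminus\mathcal F$. Game $\mathfrak G(\mathcal X,\omega,\mathcal Z)$: at each stage $k$, I chooses $X_k\in\mathcal X$ and II responds with $n_k\in X_k$; II wins if $\{n_k:k\in\omega\}\in\mathcal Z$. Game $\mathfrak G(\mathcal X,[\omega]^{<\omega},\mathcal Z)$: at each stage $k$, I chooses $X_k\in\mathcal X$ and II responds with a nonempty finite $s_k\subseteq X_k$; II wins if $\bigcup_k s_k\in\mathcal Z$. In each game I wins when II does not. A tree is a set $T$ of finite sequences of natural numbers containing the empty sequence and closed under initial segments; it is an $\mathcal F$-tree if for each $\bar s\in T$ there is $X_{\bar s}\in\mathcal F$ with $\bar s^\frown n\in T$ for all $n\in X_{\bar s}$; a branch (infinite sequence with all initial segments in $T$) is in $\mathcal F$ if its set of values is in $\mathcal F$. $\mathcal F$ is Ramsey if every $\mathcal F$-tree has a branch in $\mathcal F$; a Ramsey ultrafilter is an ultrafilter that is Ramsey.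 *)

theory Defs
  imports Main
begin

definition is_filter :: "nat set set \<Rightarrow> bool" where
  "is_filter F \<longleftrightarrow>
     (\<forall>A\<in>F. \<forall>B\<in>F. A \<inter> B \<in> F) \<and>
     (\<forall>A B. A \<in> F \<longrightarrow> A \<subseteq> B \<longrightarrow> B \<in> F) \<and>
     (\<forall>A. finite (- A) \<longrightarrow> A \<in> F)"

definition proper_filter :: "nat set set \<Rightarrow> bool" where
  "proper_filter F \<longleftrightarrow> is_filter F \<and> (\<forall>A\<in>F. infinite A)"

definition ultrafilter :: "nat set set \<Rightarrow> bool" where
  "ultrafilter F \<longleftrightarrow> proper_filter F \<and> (\<forall>A. A \<in> F \<or> - A \<in> F)"

definition is_tree :: "nat list set \<Rightarrow> bool" where
  "is_tree T \<longleftrightarrow> [] \<in> T \<and> (\<forall>s t. s @ t \<in> T \<longrightarrow> s \<in> T)"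

definition F_tree :: "nat set set \<Rightarrow> nat list set \<Rightarrow> bool" where
  "F_tree F T \<longleftrightarrow> is_tree T \<and> (\<forall>s\<in>T. \<exists>X\<in>F. \<forall>n\<in>X. s @ [n] \<in> T)"

definition branch :: "nat list set \<Rightarrow> (nat \<Rightarrow> nat) \<Rightarrow> bool" where
  "branch T b \<longleftrightarrow> (\<forall>k. map b [0..<k] \<in> T)"

definition Ramsey :: "nat set set \<Rightarrow> bool" where
  "Ramsey F \<longleftrightarrow> (\<forall>T. F_tree F T \<longrightarrow> (\<exists>b. branch T b \<and> range b \<in> F))"

definition Ramsey_ultrafilter :: "nat set set \<Rightarrow> bool" where
  "Ramsey_ultrafilter F \<longleftrightarrow> ultrafilter F \<and> Ramsey F"

(* Strategy of I: maps the finite sequence of II's previous moves to I's next move.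
   Strategy of II: maps the finite sequence of I's moves so far (including the current one)
   to II's response. (II's own earlier moves are determined by these.) *)

definition I_wins_nat :: "nat set set \<Rightarrow> nat set set \<Rightarrow> bool" where
  "I_wins_nat \<X> \<Z> \<longleftrightarrow> (\<exists>\<sigma> :: nat list \<Rightarrow> nat set.
     (\<forall>h. \<sigma> h \<in> \<X>) \<and>
     (\<forall>n :: nat \<Rightarrow> nat. (\<forall>k. n k \<in> \<sigma> (map n [0..<k])) \<longrightarrow> range n \<notin> \<Z>))"

definition II_wins_nat :: "nat set set \<Rightarrow> nat set set \<Rightarrow> bool" where
  "II_wins_nat \<X> \<Z> \<longleftrightarrow> (\<exists>\<tau> :: nat set list \<Rightarrow> nat.
     (\<forall>Xs X. set Xs \<subseteq> \<X> \<longrightarrow> X \<in> \<X> \<longrightarrow> \<tau> (Xs @ [X]) \<in> X) \<and>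
     (\<forall>X :: nat \<Rightarrow> nat set. (\<forall>k. X k \<in> \<X>) \<longrightarrow>
        range (\<lambda>k. \<tau> (map X [0..<Suc k])) \<in> \<Z>))"

definition I_wins_fin :: "nat set set \<Rightarrow> nat set set \<Rightarrow> bool" where
  "I_wins_fin \<X> \<Z> \<longleftrightarrow> (\<exists>\<sigma> :: nat set list \<Rightarrow> nat set.
     (\<forall>h. \<sigma> h \<in> \<X>) \<and>
     (\<forall>s :: nat \<Rightarrow> nat set.
        (\<forall>k. finite (s k) \<and> s k \<noteq> {} \<and> s k \<subseteq> \<sigma> (map s [0..<k])) \<longrightarrow>
        (\<Union>k. s k) \<notin> \<Z>))"

definition II_wins_fin :: "nat set set \<Rightarrow> nat set set \<Rightarrow> bool" where
  "II_wins_fin \<X> \<Z> \<longleftrightarrow> (\<exists>\<tau> :: nat set list \<Rightarrow> nat set.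
     (\<forall>Xs X. set Xs \<subseteq> \<X> \<longrightarrow> X \<in> \<X> \<longrightarrow>
        finite (\<tau> (Xs @ [X])) \<and> \<tau> (Xs @ [X]) \<noteq> {} \<and> \<tau> (Xs @ [X]) \<subseteq> X) \<and>
     (\<forall>X :: nat \<Rightarrow> nat set. (\<forall>k. X k \<in> \<X>) \<longrightarrow>
        (\<Union>k. \<tau> (map X [0..<Suc k])) \<in> \<Z>))"

end

theory Submission
  imports Defs
begin

lemma pf_inter: "proper_filter F \<Longrightarrow> A \<in> F \<Longrightarrow> B \<in> F \<Longrightarrow> A \<inter> B \<in> F"
  unfolding proper_filter_def is_filter_def by blast

lemma pf_up: "proper_filter F \<Longrightarrow> A \<in> F \<Longrightarrow> A \<subseteq> B \<Longrightarrow> B \<in> F"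
  unfolding proper_filter_def is_filter_def by blast

lemma pf_inf: "proper_filter F \<Longrightarrow> A \<in> F \<Longrightarrow> infinite A"
  unfolding proper_filter_def by blast

lemma pf_ne: "proper_filter F \<Longrightarrow> A \<in> F \<Longrightarrow> A \<noteq> {}"
  using pf_inf by fastforce

lemma inf_avoid: "infinite S \<Longrightarrow> finite E \<Longrightarrow> \<exists>x. x \<in> S \<and> x \<notin> E"
  by (meson finite_subset subsetI)

definition nxa :: "(nat list \<Rightarrow> nat set) \<Rightarrow> nat list \<times> nat list \<Rightarrow> nat" where
  "nxa \<sigma> p = (SOME x. x \<in> \<sigma> (fst p) \<and> x \<notin> set (fst p) \<union> set (snd p))"

definition nxb :: "(nat list \<Rightarrow> nat set) \<Rightarrow> nat list \<times> nat list \<Rightarrow> nat" where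
  "nxb \<sigma> p = (SOME y. y \<in> \<sigma> (snd p) \<and> y \<notin> set (fst p) \<union> set (snd p) \<union> {nxa \<sigma> p})"

primrec Pp :: "(nat list \<Rightarrow> nat set) \<Rightarrow> nat \<Rightarrow> nat list \<times> nat list" where
  "Pp \<sigma> 0 = ([], [])"
| "Pp \<sigma> (Suc k) = (fst (Pp \<sigma> k) @ [nxa \<sigma> (Pp \<sigma> k)], snd (Pp \<sigma> k) @ [nxb \<sigma> (Pp \<sigma> k)])"

lemma not_I_core:
  fixes \<sigma> :: "nat list \<Rightarrow> nat set"
  assumes pf: "proper_filter F" and sig: "\<forall>h. \<sigma> h \<in> F"
  shows "\<exists>n. (\<forall>k. n k \<in> \<sigma> (map n [0..<k])) \<and> range n \<notin> F"
proof -
  define a where "a k = nxa \<sigma> (Pp \<sigma> k)" for k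
  define b where "b k = nxb \<sigma> (Pp \<sigma> k)" for k
  have P: "Pp \<sigma> k = (map a [0..<k], map b [0..<k])" for k
    by (induction k) (auto simp: a_def b_def)
  have ha: "nxa \<sigma> p \<in> \<sigma> (fst p) \<and> nxa \<sigma> p \<notin> set (fst p) \<union> set (snd p)" for p
  proof -
    have "\<exists>x. x \<in> \<sigma> (fst p) \<and> x \<notin> set (fst p) \<union> set (snd p)"
      by (rule inf_avoid[OF pf_inf[OF pf sig[rule_format]]]) simp
    then show ?thesis unfolding nxa_def by (rule someI_ex)
  qed
  have hb: "nxb \<sigma> p \<in> \<sigma> (snd p) \<and> nxb \<sigma> p \<notin> set (fst p) \<union> set (snd p) \<union> {nxa \<sigma> p}" for p
  proof -
    have "\<exists>x. x \<in> \<sigma> (snd p) \<and> x \<notin> set (fst p) \<union> set (snd p) \<union> {nxa \<sigma> p}"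
      by (rule inf_avoid[OF pf_inf[OF pf sig[rule_format]]]) simp
    then show ?thesis unfolding nxb_def by (rule someI_ex)
  qed
  have ak: "a k = nxa \<sigma> (map a [0..<k], map b [0..<k])" for k
  proof -
    have "a k = nxa \<sigma> (Pp \<sigma> k)" by (simp only: a_def)
    then show ?thesis by (simp only: P)
  qed
  have bk: "b k = nxb \<sigma> (map a [0..<k], map b [0..<k])" for k
  proof -
    have "b k = nxb \<sigma> (Pp \<sigma> k)" by (simp only: b_def)
    then show ?thesis by (simp only: P)
  qed
  have A: "a k \<in> \<sigma> (map a [0..<k]) \<and> a k \<notin> a ` {..<k} \<and> a k \<notin> b ` {..<k}" for k
    using ha[of "(map a [0..<k], map b [0..<k])"] unfolding ak[of k, symmetric] by (simp add: atLeast0LessThan)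
  have B: "b k \<in> \<sigma> (map b [0..<k]) \<and> b k \<notin> a ` {..<k} \<and> b k \<notin> b ` {..<k} \<and> b k \<noteq> a k" for k
    using hb[of "(map a [0..<k], map b [0..<k])"] unfolding ak[of k, symmetric] bk[of k, symmetric]
    by (simp add: atLeast0LessThan)
  have disj: "range a \<inter> range b = {}"
  proof (rule ccontr)
    assume "range a \<inter> range b \<noteq> {}"
    then obtain i j where ij: "a i = b j" by auto
    consider "i < j" | "j < i" | "i = j" by linarith
    then show False
    proof cases
      case 1 then show ?thesis using B[of j] ij by (metis imageI lessThan_iff)
    next
      case 2 then show ?thesis using A[of i] ij by (metis imageI lessThan_iff)
    next
      case 3 then show ?thesis using B[of j] ij by auto
    qed
  qed
  show ?thesis
  proof (cases "range a \<in> F")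
    case False then show ?thesis using A by blast
  next
    case True
    have "range b \<notin> F"
    proof
      assume "range b \<in> F"
      then have "{} \<in> F" using pf_inter[OF pf True \<open>range b \<in> F\<close>] disj by simp
      then show False using pf_ne[OF pf] by blast
    qed
    then show ?thesis using B by blast
  qed
qed

lemma not_I_nat: assumes pf: "proper_filter F" shows "\<not> I_wins_nat F (- F)"
proof
  assume "I_wins_nat F (- F)"
  then obtain \<sigma> where s1: "\<forall>h. \<sigma> h \<in> F" and
    s2: "\<forall>n :: nat \<Rightarrow> nat. (\<forall>k. n k \<in> \<sigma> (map n [0..<k])) \<longrightarrow> range n \<notin> - F"
    unfolding I_wins_nat_def by blast
  obtain n where "\<forall>k. n k \<in> \<sigma> (map n [0..<k])" "range n \<notin> F"
    using not_I_core[OF pf s1] by blast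
  then show False using s2 by auto
qed

lemma not_I_fin: assumes pf: "proper_filter F" shows "\<not> I_wins_fin F (- F)"
proof
  assume "I_wins_fin F (- F)"
  then obtain \<sigma> where s1: "\<forall>h. \<sigma> h \<in> F" and s2: "\<forall>s :: nat \<Rightarrow> nat set.
        (\<forall>k. finite (s k) \<and> s k \<noteq> {} \<and> s k \<subseteq> \<sigma> (map s [0..<k])) \<longrightarrow>
        (\<Union>k. s k) \<notin> - F" unfolding I_wins_fin_def by blast
  obtain n where n1: "\<forall>k. n k \<in> \<sigma> (map (\<lambda>x. {x}) (map n [0..<k]))" and n2: "range n \<notin> F"
    using not_I_core[OF pf, of "\<lambda>h. \<sigma> (map (\<lambda>x. {x}) h)"] s1 by blast
  have "(\<Union>k. {n k}) \<notin> - F"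
    using s2[rule_format, of "\<lambda>k. {n k}"] n1 by (simp add: comp_def)
  moreover have "(\<Union>k. {n k}) = range n" by auto
  ultimately show False using n2 by simp
qed

lemma II_from_tree:
  fixes T :: "nat list set"
  assumes pf: "proper_filter F" and T0: "[] \<in> T"
    and Tx: "\<forall>s\<in>T. \<forall>X\<in>F. \<exists>n\<in>X. s @ [n] \<in> T"
    and Tb: "\<forall>b. branch T b \<longrightarrow> range b \<notin> F"
  shows "II_wins_nat F (- F)"
proof -
  define pick where "pick s X = (SOME n. n \<in> X \<and> s @ [n] \<in> T)" for s X
  define h where "h Xs = foldl (\<lambda>s X. s @ [pick s X]) [] Xs" for Xs
  define \<tau> where "\<tau> Xs = last (h Xs)" for Xs
  have hsnoc: "h (Xs @ [X]) = h Xs @ [pick (h Xs) X]" for Xs X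
    by (simp add: h_def)
  have pickok: "s \<in> T \<Longrightarrow> X \<in> F \<Longrightarrow> pick s X \<in> X \<and> s @ [pick s X] \<in> T" for s X
    unfolding pick_def by (rule someI_ex) (use Tx in blast)
  have hT: "set Xs \<subseteq> F \<Longrightarrow> h Xs \<in> T" for Xs
  proof (induction Xs rule: rev_induct)
    case Nil then show ?case using T0 by (simp add: h_def)
  next
    case (snoc X Xs) then show ?case using pickok by (simp add: hsnoc)
  qed
  have tsnoc: "\<tau> (Xs @ [X]) = pick (h Xs) X" for Xs X
    by (simp add: \<tau>_def hsnoc)
  show ?thesis
    unfolding II_wins_nat_def
  proof (intro exI conjI allI impI)
    fix Xs X assume "set Xs \<subseteq> F" "X \<in> F"
    then show "\<tau> (Xs @ [X]) \<in> X" using tsnoc pickok hT by auto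
  next
    fix X :: "nat \<Rightarrow> nat set" assume XF: "\<forall>k. X k \<in> F"
    define b where "b k = \<tau> (map X [0..<Suc k])" for k
    have hb: "h (map X [0..<k]) = map b [0..<k]" for k
    proof (induction k)
      case 0 then show ?case by (simp add: h_def)
    next
      case (Suc k)
      have "b k = pick (h (map X [0..<k])) (X k)" by (simp add: b_def tsnoc)
      then show ?case using Suc by (simp add: hsnoc)
    qed
    have "branch T b" unfolding branch_def
    proof
      fix k
      have "set (map X [0..<k]) \<subseteq> F" using XF by auto
      then show "map b [0..<k] \<in> T" using hT hb by metis
    qed
    then show "range (\<lambda>k. \<tau> (map X [0..<Suc k])) \<in> - F"
      using Tb b_def by auto
  qed
qed

lemma RU_not_II:
  assumes RU: "Ramsey_ultrafilter F" shows "\<not> II_wins_nat F (- F)"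
proof
  assume "II_wins_nat F (- F)"
  then obtain \<tau> :: "nat set list \<Rightarrow> nat" where
    t1: "\<forall>Xs X. set Xs \<subseteq> F \<longrightarrow> X \<in> F \<longrightarrow> \<tau> (Xs @ [X]) \<in> X" and
    t2: "\<forall>X :: nat \<Rightarrow> nat set. (\<forall>k. X k \<in> F) \<longrightarrow> range (\<lambda>k. \<tau> (map X [0..<Suc k])) \<in> - F"
    unfolding II_wins_nat_def by blast
  have uf: "ultrafilter F" and ram: "Ramsey F" using RU unfolding Ramsey_ultrafilter_def by auto
  have pf: "proper_filter F" using uf unfolding ultrafilter_def by auto
  define R where "R Xs = {\<tau> (Xs @ [X]) | X. X \<in> F}" for Xs
  have RF: "set Xs \<subseteq> F \<Longrightarrow> R Xs \<in> F" for Xs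
  proof (rule ccontr)
    assume a: "set Xs \<subseteq> F" "R Xs \<notin> F"
    then have "- R Xs \<in> F" using uf unfolding ultrafilter_def by blast
    obtain C where C: "C = - R Xs" by blast
    have CF: "C \<in> F" using C \<open>- R Xs \<in> F\<close> by simp
    have "\<tau> (Xs @ [C]) \<in> C" using t1 a CF by blast
    moreover have "\<tau> (Xs @ [C]) \<in> R Xs" unfolding R_def using CF by blast
    moreover have "C \<inter> R Xs = {}" using C by blast
    ultimately show False by blast
  qed
  define W where "W Xs n = (SOME X. X \<in> F \<and> \<tau> (Xs @ [X]) = n)" for Xs n
  have Wok: "n \<in> R Xs \<Longrightarrow> W Xs n \<in> F \<and> \<tau> (Xs @ [W Xs n]) = n" for n Xs
    unfolding W_def by (rule someI_ex) (auto simp: R_def)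
  define H where "H s = foldl (\<lambda>Xs n. Xs @ [W Xs n]) [] s" for s
  have Hsnoc: "H (s @ [n]) = H s @ [W (H s) n]" for s n by (simp add: H_def)
  define T where "T = {s. \<forall>i<length s. s ! i \<in> R (H (take i s))}"
  have Tsnoc: "(s @ [n] \<in> T) = (s \<in> T \<and> n \<in> R (H s))" for s n
    unfolding T_def by (auto simp: nth_append less_Suc_eq)
  have HF: "s \<in> T \<Longrightarrow> set (H s) \<subseteq> F" for s
  proof (induction s rule: rev_induct)
    case Nil then show ?case by (simp add: H_def)
  next
    case (snoc n s) then show ?case using Tsnoc Wok by (auto simp: Hsnoc)
  qed
  have tree: "F_tree F T" unfolding F_tree_def is_tree_def
  proof (intro conjI allI impI ballI)
    show "[] \<in> T" by (simp add: T_def)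
  next
    fix s t assume a: "s @ t \<in> T"
    show "s \<in> T"
    proof -
      show "s \<in> T" unfolding T_def
      proof (intro CollectI allI impI)
        fix i assume "i < length s"
        then have "(s @ t) ! i \<in> R (H (take i (s @ t)))"
          using a \<open>i < length s\<close> unfolding T_def mem_Collect_eq by (metis length_append trans_less_add1)
        then show "s ! i \<in> R (H (take i s))" using \<open>i < length s\<close> by (simp add: nth_append)
      qed
    qed
  next
    fix s assume "s \<in> T"
    have "R (H s) \<in> F" using RF HF \<open>s \<in> T\<close> by blast
    moreover have "\<forall>n\<in>R (H s). s @ [n] \<in> T" using Tsnoc \<open>s \<in> T\<close> by blast
    ultimately show "\<exists>X\<in>F. \<forall>n\<in>X. s @ [n] \<in> T" by blast
  qed
  then obtain b where bb: "branch T b" and bF: "range b \<in> F"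
    using ram unfolding Ramsey_def by blast
  define Xk where "Xk k = W (H (map b [0..<k])) (b k)" for k
  have bT: "map b [0..<k] \<in> T" for k using bb unfolding branch_def by blast
  have Hm: "H (map b [0..<k]) = map Xk [0..<k]" for k
    by (induction k) (simp_all add: H_def Xk_def)
  have bR: "b k \<in> R (H (map b [0..<k]))" for k
    using bT[of "Suc k"] Tsnoc by simp
  have XF: "\<forall>k. Xk k \<in> F"
  proof
    fix k show "Xk k \<in> F" unfolding Xk_def using Wok[OF bR[of k]] by blast
  qed
  have "\<tau> (map Xk [0..<Suc k]) = b k" for k
    using Wok[OF bR[of k]] Hm[of k] by (simp add: Xk_def)
  then have "range (\<lambda>k. \<tau> (map Xk [0..<Suc k])) = range b" by simp
  moreover have "range (\<lambda>k. \<tau> (map Xk [0..<Suc k])) \<in> - F" using t2 XF by blast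
  ultimately show False using bF by simp
qed

theorem theorem2p17:
  fixes F :: "nat set set"
  assumes "proper_filter F"
  shows "(I_wins_fin F (- F) \<longleftrightarrow> I_wins_nat F (- F)) \<and>
         (II_wins_fin F (- F) \<longleftrightarrow> II_wins_nat F (- F)) \<and>
         \<not> I_wins_fin F (- F) \<and>
         (II_wins_fin F (- F) \<longleftrightarrow> \<not> Ramsey_ultrafilter F)"
proof -
  have pf: "proper_filter F" by fact
  have fn: "II_wins_fin F (- F) \<Longrightarrow> II_wins_nat F (- F)"
  proof -
    assume "II_wins_fin F (- F)"
    then obtain \<tau> where t1: "\<forall>Xs X. set Xs \<subseteq> F \<longrightarrow> X \<in> F \<longrightarrow>
        finite (\<tau> (Xs @ [X])) \<and> \<tau> (Xs @ [X]) \<noteq> {} \<and> \<tau> (Xs @ [X]) \<subseteq> X"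
      and t2: "\<forall>X :: nat \<Rightarrow> nat set. (\<forall>k. X k \<in> F) \<longrightarrow>
        (\<Union>k. \<tau> (map X [0..<Suc k])) \<in> - F" unfolding II_wins_fin_def by blast
    show ?thesis unfolding II_wins_nat_def
    proof (intro exI[of _ "\<lambda>Xs. SOME n. n \<in> \<tau> Xs"] conjI allI impI)
      fix Xs X assume "set Xs \<subseteq> F" "X \<in> F"
      then show "(SOME n. n \<in> \<tau> (Xs @ [X])) \<in> X" using t1
        by (metis (no_types, lifting) ex_in_conv someI_ex subsetD)
    next
      fix X :: "nat \<Rightarrow> nat set" assume XF: "\<forall>k. X k \<in> F"
      have "range (\<lambda>k. SOME n. n \<in> \<tau> (map X [0..<Suc k])) \<subseteq> (\<Union>k. \<tau> (map X [0..<Suc k]))"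
      proof safe
        fix k
        have "set (map X [0..<k]) \<subseteq> F" using XF by auto
        then have "\<tau> (map X [0..<k] @ [X k]) \<noteq> {}" using t1 XF by blast
        then have "(SOME n. n \<in> \<tau> (map X [0..<Suc k])) \<in> \<tau> (map X [0..<Suc k])"
          by (simp add: some_in_eq)
        then show "(SOME n. n \<in> \<tau> (map X [0..<Suc k])) \<in> (\<Union>k. \<tau> (map X [0..<Suc k]))" by blast
      qed
      then show "range (\<lambda>k. SOME n. n \<in> \<tau> (map X [0..<Suc k])) \<in> - F"
        using t2 XF pf_up[OF pf] by blast
    qed
  qed
  have nf: "II_wins_nat F (- F) \<Longrightarrow> II_wins_fin F (- F)"
  proof -
    assume "II_wins_nat F (- F)"
    then obtain \<tau> :: "nat set list \<Rightarrow> nat" where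
      t1: "\<forall>Xs X. set Xs \<subseteq> F \<longrightarrow> X \<in> F \<longrightarrow> \<tau> (Xs @ [X]) \<in> X" and
      t2: "\<forall>X :: nat \<Rightarrow> nat set. (\<forall>k. X k \<in> F) \<longrightarrow> range (\<lambda>k. \<tau> (map X [0..<Suc k])) \<in> - F"
      unfolding II_wins_nat_def by blast
    show ?thesis unfolding II_wins_fin_def
      apply (rule exI[of _ "\<lambda>Xs. {\<tau> Xs}"])
      using t1 t2 by (simp add: UNION_singleton_eq_range)
  qed
  have rn: "\<not> Ramsey_ultrafilter F \<Longrightarrow> II_wins_nat F (- F)"
  proof -
    assume nr: "\<not> Ramsey_ultrafilter F"
    show ?thesis
    proof (cases "ultrafilter F")
      case False
      then obtain A where A1: "A \<notin> F" and A2: "- A \<notin> F" using pf unfolding ultrafilter_def by blast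
      show ?thesis
      proof (rule II_from_tree[OF pf, of "{s. set s \<subseteq> A}"])
        show "\<forall>s\<in>{s. set s \<subseteq> A}. \<forall>X\<in>F. \<exists>n\<in>X. s @ [n] \<in> {s. set s \<subseteq> A}"
        proof (intro ballI)
          fix s X assume "s \<in> {s. set s \<subseteq> A}" "X \<in> F"
          moreover have "X \<inter> A \<noteq> {}"
          proof
            assume "X \<inter> A = {}" then have "X \<subseteq> - A" by blast
            then show False using pf_up[OF pf \<open>X \<in> F\<close>] A2 by blast
          qed
          ultimately show "\<exists>n\<in>X. s @ [n] \<in> {s. set s \<subseteq> A}" by auto
        qed
        show "\<forall>b. branch {s. set s \<subseteq> A} b \<longrightarrow> range b \<notin> F"
        proof (intro allI impI)
          fix b assume "branch {s. set s \<subseteq> A} b"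
          then have "\<forall>k. set (map b [0..<Suc k]) \<subseteq> A" unfolding branch_def by blast
          then have "range b \<subseteq> A" by auto
          then show "range b \<notin> F" using pf_up[OF pf] A1 by blast
        qed
      qed simp
    next
      case True
      then have "\<not> Ramsey F" using nr unfolding Ramsey_ultrafilter_def by blast
      then obtain T where FT: "F_tree F T" and nb: "\<forall>b. branch T b \<longrightarrow> range b \<notin> F"
        unfolding Ramsey_def by blast
      show ?thesis
      proof (rule II_from_tree[OF pf, of T])
        show "[] \<in> T" using FT unfolding F_tree_def is_tree_def by blast
        show "\<forall>s\<in>T. \<forall>X\<in>F. \<exists>n\<in>X. s @ [n] \<in> T"
        proof (intro ballI)
          fix s X assume "s \<in> T" "X \<in> F"
          then obtain Y where "Y \<in> F" "\<forall>n\<in>Y. s @ [n] \<in> T" using FT unfolding F_tree_def by blast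
          moreover have "X \<inter> Y \<noteq> {}" using pf_ne[OF pf pf_inter[OF pf \<open>X \<in> F\<close> \<open>Y \<in> F\<close>]] .
          ultimately show "\<exists>n\<in>X. s @ [n] \<in> T" by blast
        qed
      qed (use nb in blast)
    qed
  qed
  have a1: "\<not> I_wins_fin F (- F)" using not_I_fin[OF pf] .
  have a2: "\<not> I_wins_nat F (- F)" using not_I_nat[OF pf] .
  have a3: "II_wins_fin F (- F) \<longleftrightarrow> II_wins_nat F (- F)" using fn nf by blast
  have a4: "II_wins_nat F (- F) \<longleftrightarrow> \<not> Ramsey_ultrafilter F" using rn RU_not_II by blast
  show ?thesis using a1 a2 a3 a4 by simp
qed

end
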